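(* Let $G$ be a finite nonabelian simple group, $G\le S_n$ a faithful permutation representation of minimum degree, $k\ge1$, and $\Omega=\overline G^k\subseteq\{0,1\}^{kn^2}$. Let $Q=\{(g_1,\dots,g_{2k})\in G^{2k}:g_1=g_{2k}=1\}$, acting on the variables by $M_{i,a,b}\mapsto M_{i,g_{2i-1}(a),g_{2i}(b)}$ (so $M_i\mapsto\overline{g_{2i-1}}M_i\overline{g_{2i}}^{-1}$). Let $H\le K\le Q$, and let $S$ be the edge set of a connected component of the graph $([k],E(H)\cap E(K))$. Let $r\in\mathbb N$, and for each $i\in[r]$ let $H_i\le L_i\le Q$ with $L_i\in\mathcal N_{Q,\Omega}$. Suppose $H_1\cap\dots\cap H_r=H$ and $L_1\cap\dots\cap L_r\le K$. Then there exists $i\in[r]$ with $S\subseteq E(H_i)\cap E(L_i)$.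
   Context: $\overline G$ is the set of permutation matrices of elements of $G$. For $f$ on $\Omega$, $\mathrm{Stab}_Q(f)=\{\pi\in Q:f(\pi x)=f(x)\ \forall x\in\Omega\}$, and $\mathcal N_{Q,\Omega}$ is the set of $\mathrm{Stab}_Q(f)$ for $f:\Omega\to\mathbb N$. For $H\le G^{2k}$ and $S'\subseteq[2k]$, $H{\upharpoonright}_{S'}=\{(h_j)_{j\in S'}: h\in H,\ h_j=1\ \forall j\notin S'\}$. $\mathrm{Diag}(G^{\{2i,2i+1\}})=\{(g,g):g\in G\}$. $E(H)=\{\{i,i+1\}: i\in[k-1],\ H{\upharpoonright}_{\{2i,2i+1\}}=\mathrm{Diag}(G^{\{2i,2i+1\}})\}$ is viewed as an edge set on vertex set $[k]$. *)

theory Defs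
  imports "HOL-Algebra.Sym_Groups" "HOL-Algebra.SimpleGroups"
begin

definition perm_sub :: "nat \<Rightarrow> (nat \<Rightarrow> nat) set \<Rightarrow> (nat \<Rightarrow> nat) monoid" where
  "perm_sub n Gs = (sym_group n)\<lparr>carrier := Gs\<rparr>"

definition min_degree_rep :: "nat \<Rightarrow> (nat \<Rightarrow> nat) set \<Rightarrow> bool" where
  "min_degree_rep n Gs \<longleftrightarrow>
     (\<forall>m (\<phi> :: (nat \<Rightarrow> nat) \<Rightarrow> (nat \<Rightarrow> nat)).
        \<phi> \<in> hom (perm_sub n Gs) (sym_group m) \<and> inj_on \<phi> Gs \<longrightarrow> n \<le> m)"

definition perm_mat :: "(nat \<Rightarrow> nat) \<Rightarrow> nat \<Rightarrow> nat \<Rightarrow> nat" where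
  "perm_mat g a b = (if a = g b then 1 else 0)"

text \<open>Omega: k-tuples of permutation matrices of elements of G, as 0/1-vectors indexed by
  [k] x [n] x [n] (entries outside this index set are 0).\<close>
definition Omega :: "nat \<Rightarrow> (nat \<Rightarrow> nat) set \<Rightarrow> nat \<Rightarrow> (nat \<Rightarrow> nat \<Rightarrow> nat \<Rightarrow> nat) set" where
  "Omega n Gs k = {x. \<exists>h. (\<forall>i\<in>{1..k}. h i \<in> Gs) \<and>
      x = (\<lambda>i a b. if i \<in> {1..k} \<and> a \<in> {1..n} \<and> b \<in> {1..n} then perm_mat (h i) a b else 0)}"

definition prod_grp :: "(nat \<Rightarrow> nat) set \<Rightarrow> nat \<Rightarrow> (nat \<Rightarrow> nat \<Rightarrow> nat) monoid" where
  "prod_grp Gs k = \<lparr> carrier = {h. (\<forall>j\<in>{1..2*k}. h j \<in> Gs) \<and> (\<forall>j. j \<notin> {1..2*k} \<longrightarrow> h j = id)},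
                    mult = (\<lambda>h h' j. h j \<circ> h' j), one = (\<lambda>j. id) \<rparr>"

definition Qgrp :: "(nat \<Rightarrow> nat) set \<Rightarrow> nat \<Rightarrow> (nat \<Rightarrow> nat \<Rightarrow> nat) set" where
  "Qgrp Gs k = {h \<in> carrier (prod_grp Gs k). h 1 = id \<and> h (2*k) = id}"

definition act :: "nat \<Rightarrow> nat \<Rightarrow> (nat \<Rightarrow> nat \<Rightarrow> nat) \<Rightarrow> (nat \<Rightarrow> nat \<Rightarrow> nat \<Rightarrow> nat) \<Rightarrow> (nat \<Rightarrow> nat \<Rightarrow> nat \<Rightarrow> nat)" where
  "act n k \<pi> x = (\<lambda>i a b. if i \<in> {1..k} \<and> a \<in> {1..n} \<and> b \<in> {1..n}
                           then x i (\<pi> (2*i - 1) a) (\<pi> (2*i) b) else 0)"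

definition Stab :: "nat \<Rightarrow> nat \<Rightarrow> (nat \<Rightarrow> nat \<Rightarrow> nat) set \<Rightarrow> (nat \<Rightarrow> nat \<Rightarrow> nat \<Rightarrow> nat) set
                     \<Rightarrow> ((nat \<Rightarrow> nat \<Rightarrow> nat \<Rightarrow> nat) \<Rightarrow> nat) \<Rightarrow> (nat \<Rightarrow> nat \<Rightarrow> nat) set" where
  "Stab n k Q \<Omega> f = {\<pi> \<in> Q. \<forall>x\<in>\<Omega>. f (act n k \<pi> x) = f x}"

definition NQ :: "nat \<Rightarrow> nat \<Rightarrow> (nat \<Rightarrow> nat \<Rightarrow> nat) set \<Rightarrow> (nat \<Rightarrow> nat \<Rightarrow> nat \<Rightarrow> nat) set
                     \<Rightarrow> (nat \<Rightarrow> nat \<Rightarrow> nat) set set" where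
  "NQ n k Q \<Omega> = {Stab n k Q \<Omega> f | f. True}"

text \<open>H restricted to {2i,2i+1} equals the diagonal.\<close>
definition restr_diag :: "(nat \<Rightarrow> nat) set \<Rightarrow> nat \<Rightarrow> (nat \<Rightarrow> nat \<Rightarrow> nat) set \<Rightarrow> nat \<Rightarrow> bool" where
  "restr_diag Gs k H i \<longleftrightarrow>
     {(h (2*i), h (2*i+1)) | h. h \<in> H \<and> (\<forall>j\<in>{1..2*k} - {2*i, 2*i+1}. h j = id)}
       = {(g, g) | g. g \<in> Gs}"

definition Eset :: "(nat \<Rightarrow> nat) set \<Rightarrow> nat \<Rightarrow> (nat \<Rightarrow> nat \<Rightarrow> nat) set \<Rightarrow> nat set set" where
  "Eset Gs k H = {{i, i+1} | i. 1 \<le> i \<and> i \<le> k - 1 \<and> restr_diag Gs k H i}"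

definition component_edges :: "nat \<Rightarrow> nat set set \<Rightarrow> nat set set \<Rightarrow> bool" where
  "component_edges k E S \<longleftrightarrow>
     (\<exists>u\<in>{1..k}. S = {e \<in> E. e \<subseteq> {v \<in> {1..k}. (u, v) \<in> {(a, b). {a, b} \<in> E}\<^sup>*}})"

end

theory Submission
  imports Defs
begin

definition tt :: "nat \<Rightarrow> (nat \<Rightarrow> nat) \<Rightarrow> (nat \<Rightarrow> nat) \<Rightarrow> nat \<Rightarrow> nat \<Rightarrow> nat" where
  "tt i a b = (\<lambda>j. if j = 2*i then a else if j = 2*i+1 then b else id)"

definition PP :: "(nat \<Rightarrow> nat) set \<Rightarrow> (nat \<Rightarrow> nat \<Rightarrow> nat) set \<Rightarrow> nat \<Rightarrow> ((nat \<Rightarrow> nat) \<times> (nat \<Rightarrow> nat)) set" where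
  "PP Gs L i = {(a,b). a \<in> Gs \<and> b \<in> Gs \<and> tt i a b \<in> L}"

definition Dg :: "(nat \<Rightarrow> nat) set \<Rightarrow> ((nat \<Rightarrow> nat) \<times> (nat \<Rightarrow> nat)) set" where
  "Dg Gs = {(g, g) | g. g \<in> Gs}"

definition enc :: "nat \<Rightarrow> nat \<Rightarrow> (nat \<Rightarrow> nat \<Rightarrow> nat) \<Rightarrow> (nat \<Rightarrow> nat \<Rightarrow> nat \<Rightarrow> nat)" where
  "enc n k h = (\<lambda>i a b. if i \<in> {1..k} \<and> a \<in> {1..n} \<and> b \<in> {1..n} then perm_mat (h i) a b else 0)"

lemma Omega_iff: "x \<in> Omega n Gs k \<longleftrightarrow> (\<exists>h. (\<forall>i\<in>{1..k}. h i \<in> Gs) \<and> x = enc n k h)"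
  unfolding Omega_def enc_def by simp

lemma enc_cong: "(\<And>i. i \<in> {1..k} \<Longrightarrow> h i = h' i) \<Longrightarrow> enc n k h = enc n k h'"
  unfolding enc_def by (intro ext) auto

lemma prod_carrier: "h \<in> carrier (prod_grp Gs k) \<longleftrightarrow>
   (\<forall>j\<in>{1..2*k}. h j \<in> Gs) \<and> (\<forall>j. j \<notin> {1..2*k} \<longrightarrow> h j = id)"
  unfolding prod_grp_def by simp

lemma prod_mult: "mult (prod_grp Gs k) h h' = (\<lambda>j. h j \<circ> h' j)"
  unfolding prod_grp_def by simp

lemma prod_one[simp]: "one (prod_grp Gs k) = (\<lambda>j. id)"
  unfolding prod_grp_def by simp

lemma tt_mult: "tt i a b \<otimes>\<^bsub>prod_grp Gs k\<^esub> tt i c d = tt i (a \<circ> c) (b \<circ> d)"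
  unfolding tt_def prod_mult by (intro ext) auto

lemma tt_one: "tt i id id = (\<lambda>j. id)"
  unfolding tt_def by (intro ext) auto

lemma tt_inj: "tt i a b = tt i c d \<Longrightarrow> a = c \<and> b = d"
  unfolding tt_def by (metis (no_types) n_not_Suc_n Suc_eq_plus1)

locale PS =
  fixes n :: nat and Gs :: "(nat \<Rightarrow> nat) set"
  assumes sg: "subgroup Gs (sym_group n)"
begin

abbreviation "Gp \<equiv> perm_sub n Gs"

lemma Gp_simps[simp]: "carrier Gp = Gs" "mult Gp = (\<circ>)" "one Gp = id"
  by (simp_all add: perm_sub_def sym_group_def)

lemma grp: "group Gp"
  unfolding perm_sub_def by (rule subgroup.subgroup_is_group[OF sg sym_group_is_group])

definition iv where "iv g = inv\<^bsub>Gp\<^esub> g"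

lemma iv_closed[simp]: "g \<in> Gs \<Longrightarrow> iv g \<in> Gs"
  unfolding iv_def using group.inv_closed[OF grp, of g] by simp

lemma iv_l[simp]: "g \<in> Gs \<Longrightarrow> iv g \<circ> g = id"
  unfolding iv_def using group.l_inv[OF grp, of g] by simp

lemma iv_r[simp]: "g \<in> Gs \<Longrightarrow> g \<circ> iv g = id"
  unfolding iv_def using group.r_inv[OF grp, of g] by simp

lemma iv_l'[simp]: "g \<in> Gs \<Longrightarrow> iv g (g x) = x"
  using iv_l[of g] by (metis comp_apply id_apply)

lemma iv_r'[simp]: "g \<in> Gs \<Longrightarrow> g (iv g x) = x"
  using iv_r[of g] by (metis comp_apply id_apply)

lemma iv_id[simp]: "iv id = id"
  unfolding iv_def using monoid.inv_one[OF group.is_monoid[OF grp]] by simp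

lemma iv_iv[simp]: "g \<in> Gs \<Longrightarrow> iv (iv g) = g"
  unfolding iv_def using group.inv_inv[OF grp, of g] by simp

lemma id_in[simp]: "id \<in> Gs"
  using subgroup.one_closed[OF sg] by (simp add: sym_group_def)

lemma comp_in[simp]: "g \<in> Gs \<Longrightarrow> h \<in> Gs \<Longrightarrow> g \<circ> h \<in> Gs"
  using subgroup.m_closed[OF sg, of g h] by (simp add: sym_group_def)

lemma perm_in: "g \<in> Gs \<Longrightarrow> g permutes {1..n}"
  using subgroup.subset[OF sg] by (auto simp: sym_group_def)

lemma perm_range: "g \<in> Gs \<Longrightarrow> a \<in> {1..n} \<Longrightarrow> g a \<in> {1..n}"
  using permutes_in_image[OF perm_in[of g], of a] by simp

lemma prod_group: "group (prod_grp Gs k)"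
proof (rule groupI)
  fix x assume x: "x \<in> carrier (prod_grp Gs k)"
  define y where "y = (\<lambda>j. if j \<in> {1..2*k} then iv (x j) else id)"
  have "y \<in> carrier (prod_grp Gs k)" using x unfolding y_def prod_carrier by auto
  moreover have "y \<otimes>\<^bsub>prod_grp Gs k\<^esub> x = \<one>\<^bsub>prod_grp Gs k\<^esub>"
    using x unfolding y_def prod_carrier prod_mult by (intro ext) auto
  ultimately show "\<exists>y\<in>carrier (prod_grp Gs k). y \<otimes>\<^bsub>prod_grp Gs k\<^esub> x = \<one>\<^bsub>prod_grp Gs k\<^esub>" by blast
qed (auto simp: prod_carrier prod_mult o_assoc)

lemma tt_carrier: "a \<in> Gs \<Longrightarrow> b \<in> Gs \<Longrightarrow> 1 \<le> i \<Longrightarrow> i + 1 \<le> k \<Longrightarrow> tt i a b \<in> carrier (prod_grp Gs k)"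
  unfolding prod_carrier tt_def by auto

lemma tt_inv: "a \<in> Gs \<Longrightarrow> b \<in> Gs \<Longrightarrow> 1 \<le> i \<Longrightarrow> i + 1 \<le> k \<Longrightarrow>
   inv\<^bsub>prod_grp Gs k\<^esub> (tt i a b) = tt i (iv a) (iv b)"
  proof (rule group.inv_equality[OF prod_group])
  assume "a \<in> Gs" "b \<in> Gs" "1 \<le> i" "i + 1 \<le> k"
  then show "tt i (iv a) (iv b) \<otimes>\<^bsub>prod_grp Gs k\<^esub> tt i a b = \<one>\<^bsub>prod_grp Gs k\<^esub>"
    "tt i a b \<in> carrier (prod_grp Gs k)" "tt i (iv a) (iv b) \<in> carrier (prod_grp Gs k)"
    by (simp_all only: tt_mult iv_l tt_one prod_one tt_carrier iv_closed)
qed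

lemma restr_PP:
  assumes "L \<subseteq> carrier (prod_grp Gs k)" "1 \<le> i" "i + 1 \<le> k"
  shows "restr_diag Gs k L i \<longleftrightarrow> PP Gs L i = Dg Gs"
proof -
  have "{(h (2*i), h (2*i+1)) | h. h \<in> L \<and> (\<forall>j\<in>{1..2*k} - {2*i, 2*i+1}. h j = id)} = PP Gs L i"
  proof (intro equalityI subsetI)
    fix p assume "p \<in> {(h (2*i), h (2*i+1)) | h. h \<in> L \<and> (\<forall>j\<in>{1..2*k} - {2*i, 2*i+1}. h j = id)}"
    then obtain h where h: "p = (h (2*i), h (2*i+1))" "h \<in> L" "\<forall>j\<in>{1..2*k} - {2*i, 2*i+1}. h j = id" by blast
    have hc: "h \<in> carrier (prod_grp Gs k)" using h assms by auto
    have "h = tt i (h (2*i)) (h (2*i+1))"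
    proof (rule ext)
      fix j
      show "h j = tt i (h (2*i)) (h (2*i+1)) j"
      proof (cases "j = 2*i \<or> j = 2*i+1")
        case True
        then show ?thesis by (auto simp: tt_def)
      next
        case False
        then have "tt i (h (2*i)) (h (2*i+1)) j = id" by (simp add: tt_def)
        moreover have "h j = id"
        proof (cases "j \<in> {1..2*k}")
          case True
          then show ?thesis using h(3) False by blast
        next
          case False
          then show ?thesis using hc unfolding prod_carrier by blast
        qed
        ultimately show ?thesis by simp
      qed
    qed
    moreover have "h (2*i) \<in> Gs" "h (2*i+1) \<in> Gs" using hc assms unfolding prod_carrier by auto
    ultimately show "p \<in> PP Gs L i" using h unfolding PP_def by auto
  next
    fix p assume "p \<in> PP Gs L i"
    then obtain a b where "p = (a,b)" "tt i a b \<in> L" unfolding PP_def by auto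
    then show "p \<in> {(h (2*i), h (2*i+1)) | h. h \<in> L \<and> (\<forall>j\<in>{1..2*k} - {2*i, 2*i+1}. h j = id)}"
      by (intro CollectI exI[of _ "tt i a b"]) (auto simp: tt_def)
  qed
  then show ?thesis unfolding restr_diag_def Dg_def by simp
qed


lemma iv_l_assoc[simp]: "g \<in> Gs \<Longrightarrow> iv g \<circ> (g \<circ> x) = x"
  by (simp add: comp_assoc[symmetric])

lemma iv_r_assoc[simp]: "g \<in> Gs \<Longrightarrow> g \<circ> (iv g \<circ> x) = x"
  by (simp add: comp_assoc[symmetric])

lemma simp_full:
  assumes simple: "simple_group Gp" and L: "subgroup L (prod_grp Gs k)" and i: "1 \<le> i" "i + 1 \<le> k"
    and D: "Dg Gs \<subseteq> PP Gs L i" and ne: "PP Gs L i \<noteq> Dg Gs"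
  shows "Gs \<times> Gs \<subseteq> PP Gs L i"
proof -
  have diag: "\<And>g. g \<in> Gs \<Longrightarrow> tt i g g \<in> L" using D unfolding Dg_def PP_def by auto
  have mulL: "\<And>x y. x \<in> L \<Longrightarrow> y \<in> L \<Longrightarrow> x \<otimes>\<^bsub>prod_grp Gs k\<^esub> y \<in> L"
    using subgroup.m_closed[OF L] by blast
  obtain a b where ab: "a \<in> Gs" "b \<in> Gs" "a \<noteq> b" "tt i a b \<in> L"
    using D ne unfolding PP_def Dg_def by auto
  have x1: "tt i (a \<circ> iv b) id \<in> L"
    using mulL[OF ab(4) diag[of "iv b"]] ab by (simp add: tt_mult)
  define N where "N = {g \<in> Gs. tt i g id \<in> L}"
  have "N \<lhd> Gp"
  proof (rule group.normal_invI[OF grp])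
    show "subgroup N Gp"
    proof (rule group.subgroupI[OF grp])
      show "N \<subseteq> carrier Gp" unfolding N_def by auto
      have "tt i id id \<in> L" using subgroup.one_closed[OF L] by (simp add: tt_one)
      then show "N \<noteq> {}" unfolding N_def using id_in by blast
    next
      fix g assume g: "g \<in> N"
      then have "inv\<^bsub>prod_grp Gs k\<^esub> (tt i g id) \<in> L" "g \<in> Gs" 
        using subgroup.m_inv_closed[OF L] unfolding N_def by auto
      then have "tt i (iv g) (iv id) \<in> L" using tt_inv[of g id i k] i by simp
      then show "inv\<^bsub>Gp\<^esub> g \<in> N" using \<open>g \<in> Gs\<close> unfolding N_def iv_def[symmetric] by simp
    next
      fix g h assume "g \<in> N" "h \<in> N"
      then show "g \<otimes>\<^bsub>Gp\<^esub> h \<in> N" unfolding N_def using mulL[of "tt i g id" "tt i h id"]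
        by (simp add: tt_mult)
    qed
  next
    fix x h assume x: "x \<in> carrier Gp" and h: "h \<in> N"
    have "tt i x x \<otimes>\<^bsub>prod_grp Gs k\<^esub> tt i h id \<otimes>\<^bsub>prod_grp Gs k\<^esub> tt i (iv x) (iv x) \<in> L"
      using x h diag unfolding N_def by (intro mulL) auto
    then have "tt i (x \<circ> h \<circ> iv x) id \<in> L" using x by (simp only: tt_mult) simp
    then show "x \<otimes>\<^bsub>Gp\<^esub> h \<otimes>\<^bsub>Gp\<^esub> inv\<^bsub>Gp\<^esub> x \<in> N"
      using x h unfolding N_def iv_def[symmetric] by simp
  qed
  then have "N = Gs \<or> N = {id}"
    using simple_group.no_real_normal_subgroup[OF simple] by simp
  moreover have "a \<circ> iv b \<in> N" using x1 ab unfolding N_def by simp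
  moreover have "a \<circ> iv b \<noteq> id"
  proof
    assume "a \<circ> iv b = id"
    then have "a \<circ> iv b \<circ> b = b" by simp
    then show False using ab by (simp add: comp_assoc)
  qed
  ultimately have NG: "N = Gs" by auto
  show ?thesis
  proof
    fix p assume "p \<in> Gs \<times> Gs"
    then obtain c d where cd: "p = (c,d)" "c \<in> Gs" "d \<in> Gs" by auto
    have "tt i (c \<circ> iv d) id \<otimes>\<^bsub>prod_grp Gs k\<^esub> tt i d d \<in> L"
      using NG cd diag unfolding N_def by (intro mulL) auto
    then have "tt i c d \<in> L" using cd by (simp add: tt_mult comp_assoc)
    then show "p \<in> PP Gs L i" using cd unfolding PP_def by simp
  qed
qed


definition act' :: "(nat \<Rightarrow> nat \<Rightarrow> nat) \<Rightarrow> (nat \<Rightarrow> nat \<Rightarrow> nat) \<Rightarrow> nat \<Rightarrow> nat \<Rightarrow> nat" where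
  "act' \<pi> h = (\<lambda>i. iv (\<pi> (2*i - 1)) \<circ> h i \<circ> \<pi> (2*i))"

lemma act'_closed:
  assumes "\<pi> \<in> carrier (prod_grp Gs k)" "\<forall>i\<in>{1..k}. h i \<in> Gs"
  shows "\<forall>i\<in>{1..k}. act' \<pi> h i \<in> Gs"
proof
  fix i assume i: "i \<in> {1..k}"
  then have "2*i - 1 \<in> {1..2*k}" "2*i \<in> {1..2*k}" by auto
  then show "act' \<pi> h i \<in> Gs" using assms i unfolding act'_def prod_carrier by auto
qed

lemma act_enc:
  assumes "\<pi> \<in> carrier (prod_grp Gs k)" "\<forall>i\<in>{1..k}. h i \<in> Gs"
  shows "act n k \<pi> (enc n k h) = enc n k (act' \<pi> h)"
proof (intro ext)
  fix i a b
  show "act n k \<pi> (enc n k h) i a b = enc n k (act' \<pi> h) i a b"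
  proof (cases "i \<in> {1..k} \<and> a \<in> {1..n} \<and> b \<in> {1..n}")
    case True
    then have "2*i - 1 \<in> {1..2*k}" "2*i \<in> {1..2*k}" by auto
    then have pq: "\<pi> (2*i - 1) \<in> Gs" "\<pi> (2*i) \<in> Gs" using assms unfolding prod_carrier by auto
    then have r: "\<pi> (2*i - 1) a \<in> {1..n}" "\<pi> (2*i) b \<in> {1..n}" using True perm_range by auto
    have "(\<pi> (2*i - 1) a = h i (\<pi> (2*i) b)) \<longleftrightarrow> (a = iv (\<pi> (2*i - 1)) (h i (\<pi> (2*i) b)))"
      using pq by (metis iv_l' iv_r')
    then show ?thesis using True r unfolding act_def enc_def act'_def perm_mat_def by simp
  next
    case False
    then show ?thesis unfolding act_def enc_def by auto
  qed
qed

lemma odd_facts: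
  fixes i j :: nat
  assumes "1 \<le> j"
  shows "2*j - 1 \<noteq> 2*i" "2*j \<noteq> 2*i+1" "2*j - 1 \<noteq> 2*i+2" "(2*j - 1 = 2*i+1) \<longleftrightarrow> j = i+1" "(2*j = 2*i+2) \<longleftrightarrow> j = i+1"
    "(2*j = 2*i) \<longleftrightarrow> j = i" "2*j \<noteq> 2*i - 1" "i \<ge> 1 \<Longrightarrow> (2*j - 1 = 2*i - 1) \<longleftrightarrow> j = i"
  using assms by presburger+

lemma tt_in_Q:
  assumes "a \<in> Gs" "b \<in> Gs" "1 \<le> i" "i + 1 \<le> k"
  shows "tt i a b \<in> Qgrp Gs k"
proof -
  have "tt i a b \<in> carrier (prod_grp Gs k)" using assms tt_carrier by auto
  moreover have "tt i a b 1 = id" using assms(3) unfolding tt_def by auto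
  moreover have "2*k \<noteq> 2*i" "2*k \<noteq> 2*i+1" using assms(4) by presburger+
  then have "tt i a b (2*k) = id" unfolding tt_def by auto
  ultimately show ?thesis unfolding Qgrp_def by auto
qed

lemma clos_R:
  assumes L: "L = Stab n k (Qgrp Gs k) (Omega n Gs k) f" and i: "1 \<le> i" "i + 2 \<le> k"
    and D: "\<And>g. g \<in> Gs \<Longrightarrow> tt i g g \<in> L" and F: "\<And>a. a \<in> Gs \<Longrightarrow> tt (i+1) a id \<in> L"
    and g: "g \<in> Gs"
  shows "tt i g id \<in> L"
proof -
  have stab: "\<And>\<pi> x. \<pi> \<in> L \<Longrightarrow> x \<in> Omega n Gs k \<Longrightarrow> f (act n k \<pi> x) = f x"
    using L by (simp add: Stab_def)
  have LQ: "\<And>\<pi>. \<pi> \<in> L \<Longrightarrow> \<pi> \<in> carrier (prod_grp Gs k)" using L by (auto simp: Stab_def Qgrp_def)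
  have tQ: "tt i g id \<in> Qgrp Gs k" using tt_in_Q[of g id i k] g i by simp
  have "\<forall>x\<in>Omega n Gs k. f (act n k (tt i g id) x) = f x"
  proof
    fix x assume "x \<in> Omega n Gs k"
    then obtain h where h: "\<forall>i\<in>{1..k}. h i \<in> Gs" "x = enc n k h" unfolding Omega_iff by auto
    define D' where "D' = tt i g g"
    define hD where "hD = act' D' h"
    define c where "c = h (i+1)"
    define a' where "a' = iv c \<circ> g \<circ> c"
    define F' where "F' = tt (i+1) a' id"
    have c: "c \<in> Gs" using h i unfolding c_def by auto
    have a': "a' \<in> Gs" using c g unfolding a'_def by simp
    have D'L: "D' \<in> L" using D g unfolding D'_def by auto
    have F'L: "F' \<in> L" using F a' unfolding F'_def by auto
    have hD: "\<forall>i\<in>{1..k}. hD i \<in> Gs" unfolding hD_def using act'_closed LQ[OF D'L] h by auto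
    have tv: "\<And>x. tt i g id x = (if x = 2*i then g else id)" by (simp add: tt_def)
    have Dv: "\<And>x. D' x = (if x = 2*i \<or> x = 2*i+1 then g else id)" by (simp add: tt_def D'_def)
    have Fv: "\<And>x. F' x = (if x = 2*i+2 then a' else id)" by (simp add: tt_def F'_def)
    have eq: "enc n k (act' (tt i g id) h) = enc n k (act' F' hD)"
    proof (rule enc_cong)
      fix j assume j: "j \<in> {1..k}"
      then have j1: "1 \<le> j" by auto
      note o = odd_facts[OF j1, of i]
      show "act' (tt i g id) h j = act' F' hD j"
      proof -
        consider "j = i" | "j = i + 1" | "j \<noteq> i \<and> j \<noteq> i + 1" by blast
        then show ?thesis
        proof cases
          case 1
          then show ?thesis unfolding act'_def hD_def tv Dv Fv using o by simp
        next
          case 2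
          then have hj: "h j = c" unfolding c_def by simp
          show ?thesis unfolding act'_def hD_def tv Dv Fv a'_def using o g c hj 2
            by (simp add: comp_assoc)
        next
          case 3
          then show ?thesis unfolding act'_def hD_def tv Dv Fv using o by simp
        qed
      qed
    qed
    have "f (act n k (tt i g id) x) = f (enc n k (act' (tt i g id) h))"
      using h act_enc[OF _ h(1)] tQ unfolding Qgrp_def by auto
    also have "\<dots> = f (enc n k (act' F' hD))" using eq by simp
    also have "\<dots> = f (act n k F' (enc n k hD))" using act_enc[OF LQ[OF F'L] hD] by simp
    also have "\<dots> = f (enc n k hD)" using stab[OF F'L] hD unfolding Omega_iff by auto
    also have "\<dots> = f (act n k D' (enc n k h))" unfolding hD_def using act_enc[OF LQ[OF D'L] h(1)] by simp
    also have "\<dots> = f x" using stab[OF D'L] h unfolding Omega_iff by auto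
    finally show "f (act n k (tt i g id) x) = f x" .
  qed
  then show ?thesis using tQ L by (simp add: Stab_def)
qed


lemma clos_L:
  assumes L: "L = Stab n k (Qgrp Gs k) (Omega n Gs k) f" and i: "2 \<le> i" "i + 1 \<le> k"
    and D: "\<And>g. g \<in> Gs \<Longrightarrow> tt i g g \<in> L" and F: "\<And>b. b \<in> Gs \<Longrightarrow> tt (i-1) id b \<in> L"
    and g: "g \<in> Gs"
  shows "tt i id g \<in> L"
proof -
  have stab: "\<And>\<pi> x. \<pi> \<in> L \<Longrightarrow> x \<in> Omega n Gs k \<Longrightarrow> f (act n k \<pi> x) = f x"
    using L by (simp add: Stab_def)
  have LQ: "\<And>\<pi>. \<pi> \<in> L \<Longrightarrow> \<pi> \<in> carrier (prod_grp Gs k)" using L by (auto simp: Stab_def Qgrp_def)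
  have tQ: "tt i id g \<in> Qgrp Gs k" using tt_in_Q[of id g i k] g i by simp
  have "\<forall>x\<in>Omega n Gs k. f (act n k (tt i id g) x) = f x"
  proof
    fix x assume "x \<in> Omega n Gs k"
    then obtain h where h: "\<forall>i\<in>{1..k}. h i \<in> Gs" "x = enc n k h" unfolding Omega_iff by auto
    define D' where "D' = tt i g g"
    define c where "c = h i"
    define b' where "b' = c \<circ> iv g \<circ> iv c"
    define F' where "F' = tt (i-1) id (iv b')"
    define hF where "hF = act' F' h"
    have c: "c \<in> Gs" using h i unfolding c_def by auto
    have b': "b' \<in> Gs" using c g unfolding b'_def by simp
    have D'L: "D' \<in> L" using D g unfolding D'_def by auto
    have F'L: "F' \<in> L" using F b' unfolding F'_def by auto
    have hF: "\<forall>i\<in>{1..k}. hF i \<in> Gs" unfolding hF_def using act'_closed LQ[OF F'L] h by auto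
    have tv: "\<And>x. tt i id g x = (if x = 2*i+1 then g else id)" by (simp add: tt_def)
    have Dv: "\<And>x. D' x = (if x = 2*i \<or> x = 2*i+1 then g else id)" by (simp add: tt_def D'_def)
    have ii: "2*(i-1) + 1 = 2*i - 1" "2*(i-1) \<noteq> 2*i - 1" using i by arith+
    have Fv: "\<And>x. F' x = (if x = 2*i - 1 then iv b' else id)" 
      unfolding tt_def F'_def using ii by auto
    have eq: "enc n k (act' (tt i id g) h) = enc n k (act' D' hF)"
    proof (rule enc_cong)
      fix j assume j: "j \<in> {1..k}"
      then have j1: "1 \<le> j" by auto
      note o = odd_facts[OF j1, of i]
      have i1: "1 \<le> i" using i by simp
      show "act' (tt i id g) h j = act' D' hF j"
      proof -
        consider "j = i" | "j = i + 1" | "j \<noteq> i \<and> j \<noteq> i + 1" by blast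
        then show ?thesis
        proof cases
          case 1
          then have hj: "h j = c" unfolding c_def by simp
          have "b' \<circ> c \<circ> g = c" unfolding b'_def using c g by (simp add: comp_assoc)
          then show ?thesis unfolding act'_def hF_def tv Dv Fv using o i1 hj 1 b'
            by (simp add: comp_assoc)
        next
          case 2
          then show ?thesis unfolding act'_def hF_def tv Dv Fv using o i1 by simp
        next
          case 3
          then show ?thesis unfolding act'_def hF_def tv Dv Fv using o i1 by simp
        qed
      qed
    qed
    have "f (act n k (tt i id g) x) = f (enc n k (act' (tt i id g) h))"
      using h act_enc[OF _ h(1)] tQ unfolding Qgrp_def by auto
    also have "\<dots> = f (enc n k (act' D' hF))" using eq by simp
    also have "\<dots> = f (act n k D' (enc n k hF))" using act_enc[OF LQ[OF D'L] hF] by simp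
    also have "\<dots> = f (enc n k hF)" using stab[OF D'L] hF unfolding Omega_iff by auto
    also have "\<dots> = f (act n k F' (enc n k h))" unfolding hF_def using act_enc[OF LQ[OF F'L] h(1)] by simp
    also have "\<dots> = f x" using stab[OF F'L] h unfolding Omega_iff by auto
    finally show "f (act n k (tt i id g) x) = f x" .
  qed
  then show ?thesis using tQ L by (simp add: Stab_def)
qed


end

lemma PP_mono: "L \<subseteq> L' \<Longrightarrow> PP Gs L i \<subseteq> PP Gs L' i"
  unfolding PP_def by auto

lemma edge_inj: "{i, i+1} = {j, j+(1::nat)} \<Longrightarrow> i = j"
  by (auto simp: doubleton_eq_iff)

theorem lemma6p10:
  fixes n k r :: nat and Gs :: "(nat \<Rightarrow> nat) set"
    and H K :: "(nat \<Rightarrow> nat \<Rightarrow> nat) set" and S :: "nat set set"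
    and Hs Ls :: "nat \<Rightarrow> (nat \<Rightarrow> nat \<Rightarrow> nat) set"
  assumes "subgroup Gs (sym_group n)"
    and "finite Gs"
    and "simple_group (perm_sub n Gs)"
    and "\<not> comm_group (perm_sub n Gs)"
    and "min_degree_rep n Gs"
    and "k \<ge> 1"
    and "subgroup H (prod_grp Gs k)" and "subgroup K (prod_grp Gs k)"
    and "H \<subseteq> K" and "K \<subseteq> Qgrp Gs k"
    and "component_edges k (Eset Gs k H \<inter> Eset Gs k K) S"
    and "r \<ge> 1"
    and "\<forall>i\<in>{1..r}. subgroup (Hs i) (prod_grp Gs k) \<and> subgroup (Ls i) (prod_grp Gs k)
                   \<and> Hs i \<subseteq> Ls i \<and> Ls i \<subseteq> Qgrp Gs k
                   \<and> Ls i \<in> NQ n k (Qgrp Gs k) (Omega n Gs k)"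
    and "(\<Inter>i\<in>{1..r}. Hs i) = H"
    and "(\<Inter>i\<in>{1..r}. Ls i) \<subseteq> K"
  shows "\<exists>i\<in>{1..r}. S \<subseteq> Eset Gs k (Hs i) \<inter> Eset Gs k (Ls i)"
proof -
  interpret PS n Gs by (rule PS.intro[OF assms(1)])
  have simple: "simple_group Gp" using assms(3) .
  have "Gs \<noteq> {id}" using simple_group.simple_not_triv[OF simple] by simp
  then obtain g0 where g0: "g0 \<in> Gs" "g0 \<noteq> id" using id_in by blast
  define E where "E = Eset Gs k H \<inter> Eset Gs k K"
  have Hc: "H \<subseteq> carrier (prod_grp Gs k)" using assms(7) subgroup.subset by blast
  have Kc: "K \<subseteq> carrier (prod_grp Gs k)" using assms(8) subgroup.subset by blast
  have Hsg: "\<And>l. l \<in> {1..r} \<Longrightarrow> subgroup (Hs l) (prod_grp Gs k)" using assms(13) by blast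
  have Lsg: "\<And>l. l \<in> {1..r} \<Longrightarrow> subgroup (Ls l) (prod_grp Gs k)" using assms(13) by blast
  have HL: "\<And>l. l \<in> {1..r} \<Longrightarrow> Hs l \<subseteq> Ls l" using assms(13) by blast
  have LN: "\<And>l. l \<in> {1..r} \<Longrightarrow> Ls l \<in> NQ n k (Qgrp Gs k) (Omega n Gs k)" using assms(13) by blast
  have Hsc: "\<And>l. l \<in> {1..r} \<Longrightarrow> Hs l \<subseteq> carrier (prod_grp Gs k)" using Hsg subgroup.subset by blast
  have Lsc: "\<And>l. l \<in> {1..r} \<Longrightarrow> Ls l \<subseteq> carrier (prod_grp Gs k)" using Lsg subgroup.subset by blast
  have HHs: "\<And>l. l \<in> {1..r} \<Longrightarrow> H \<subseteq> Hs l" using assms(14) by blast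
  have Eset_iff: "\<And>L e. L \<subseteq> carrier (prod_grp Gs k) \<Longrightarrow>
      e \<in> Eset Gs k L \<longleftrightarrow> (\<exists>i. 1 \<le> i \<and> i + 1 \<le> k \<and> e = {i, i+1} \<and> PP Gs L i = Dg Gs)"
  proof -
    fix L e assume Lc: "L \<subseteq> carrier (prod_grp Gs k)"
    show "e \<in> Eset Gs k L \<longleftrightarrow> (\<exists>i. 1 \<le> i \<and> i + 1 \<le> k \<and> e = {i, i+1} \<and> PP Gs L i = Dg Gs)"
      unfolding Eset_def using restr_PP[OF Lc] assms(6)
      by (auto simp del: One_nat_def)
  qed
  have inE: "\<And>i. 1 \<le> i \<Longrightarrow> i + 1 \<le> k \<Longrightarrow> {i, i+1} \<in> E \<Longrightarrow> PP Gs H i = Dg Gs \<and> PP Gs K i = Dg Gs"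
  proof -
    fix i assume i: "1 \<le> i" "i + 1 \<le> k" "{i, i+1} \<in> E"
    have "\<exists>j. 1 \<le> j \<and> j + 1 \<le> k \<and> {i, i+1} = {j, j+1} \<and> PP Gs H j = Dg Gs"
      using i(3) Eset_iff[OF Hc] unfolding E_def by simp
    then obtain j where j: "{i, i+1} = {j, j+1}" "PP Gs H j = Dg Gs" by blast
    have "\<exists>j. 1 \<le> j \<and> j + 1 \<le> k \<and> {i, i+1} = {j, j+1} \<and> PP Gs K j = Dg Gs"
      using i(3) Eset_iff[OF Kc] unfolding E_def by simp
    then obtain j' where j': "{i, i+1} = {j', j'+1}" "PP Gs K j' = Dg Gs" by blast
    have "j = i" "j' = i" using edge_inj j(1) j'(1) by metis+
    then show "PP Gs H i = Dg Gs \<and> PP Gs K i = Dg Gs" using j j' by simp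
  qed
  have edge_of: "\<And>e. e \<in> E \<Longrightarrow> \<exists>j. 1 \<le> j \<and> j + 1 \<le> k \<and> e = {j, j+1}"
    unfolding E_def using Eset_iff[OF Hc] by blast
  have lowerb: "\<And>l i. l \<in> {1..r} \<Longrightarrow> 1 \<le> i \<Longrightarrow> i + 1 \<le> k \<Longrightarrow> {i, i+1} \<in> E \<Longrightarrow>
      Dg Gs \<subseteq> PP Gs (Hs l) i \<and> PP Gs (Hs l) i \<subseteq> PP Gs (Ls l) i"
    using inE HHs HL PP_mono by metis
  have exists: "\<And>i. 1 \<le> i \<Longrightarrow> i + 1 \<le> k \<Longrightarrow> {i, i+1} \<in> E \<Longrightarrow> \<exists>l\<in>{1..r}. PP Gs (Ls l) i = Dg Gs"
  proof (rule ccontr)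
    fix i assume i: "1 \<le> i" "i + 1 \<le> k" "{i, i+1} \<in> E" and no: "\<not> (\<exists>l\<in>{1..r}. PP Gs (Ls l) i = Dg Gs)"
    have "\<And>l. l \<in> {1..r} \<Longrightarrow> tt i g0 id \<in> Ls l"
    proof -
      fix l assume l: "l \<in> {1..r}"
      have "Gs \<times> Gs \<subseteq> PP Gs (Ls l) i"
        using simp_full[OF simple Lsg[OF l] i(1,2)] lowerb[OF l i] no l by blast
      then show "tt i g0 id \<in> Ls l" using g0 id_in unfolding PP_def by blast
    qed
    then have "tt i g0 id \<in> K" using assms(15) by blast
    then have "(g0, id) \<in> PP Gs K i" using g0 unfolding PP_def by auto
    then show False using inE[OF i] g0 unfolding Dg_def by auto
  qed
  have propag: "\<And>l i i'. l \<in> {1..r} \<Longrightarrow> 1 \<le> i \<Longrightarrow> i + 1 \<le> k \<Longrightarrow> 1 \<le> i' \<Longrightarrow> i' + 1 \<le> k \<Longrightarrow>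
      {i', i'+1} \<in> E \<Longrightarrow> PP Gs (Ls l) i = Dg Gs \<Longrightarrow> i' = i + 1 \<or> i' + 1 = i \<or> i' = i \<Longrightarrow>
      PP Gs (Ls l) i' = Dg Gs"
  proof (rule ccontr)
    fix l i i' assume l: "l \<in> {1..r}" and i: "1 \<le> i" "i + 1 \<le> k" and i': "1 \<le> i'" "i' + 1 \<le> k"
      and e': "{i', i'+1} \<in> E" and good: "PP Gs (Ls l) i = Dg Gs"
      and rel: "i' = i + 1 \<or> i' + 1 = i \<or> i' = i" and ne: "PP Gs (Ls l) i' \<noteq> Dg Gs"
    have full: "Gs \<times> Gs \<subseteq> PP Gs (Ls l) i'"
      using simp_full[OF simple Lsg[OF l] i'(1,2)] lowerb[OF l i' e'] ne by blast
    obtain f where f: "Ls l = Stab n k (Qgrp Gs k) (Omega n Gs k) f" using LN[OF l] unfolding NQ_def by auto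
    have D: "\<And>g. g \<in> Gs \<Longrightarrow> tt i g g \<in> Ls l" using good unfolding PP_def Dg_def by auto
    consider "i' = i + 1" | "i' + 1 = i" | "i' = i" using rel by blast
    then show False
    proof cases
      case 1
      have F: "\<And>a. a \<in> Gs \<Longrightarrow> tt (i+1) a id \<in> Ls l"
      proof -
        fix a assume a: "a \<in> Gs"
        then have "(a, id) \<in> PP Gs (Ls l) i'" using full id_in by blast
        then show "tt (i+1) a id \<in> Ls l" using 1 unfolding PP_def by simp
      qed
      have "tt i g0 id \<in> Ls l" using clos_R[OF f i(1) _ D F g0(1)] 1 i' by simp
      then have "(g0, id) \<in> PP Gs (Ls l) i" using g0 unfolding PP_def by auto
      then show False using good g0 unfolding Dg_def by auto
    next
      case 2
      have ii: "i - 1 = i'" using 2 by simp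
      have F: "\<And>b. b \<in> Gs \<Longrightarrow> tt (i-1) id b \<in> Ls l"
      proof -
        fix b assume b: "b \<in> Gs"
        then have "(id, b) \<in> PP Gs (Ls l) i'" using full id_in by blast
        then show "tt (i-1) id b \<in> Ls l" using ii unfolding PP_def by simp
      qed
      have "tt i id g0 \<in> Ls l" using clos_L[OF f _ i(2) D F g0(1)] 2 i' by simp
      then have "(id, g0) \<in> PP Gs (Ls l) i" using g0 unfolding PP_def by auto
      then show False using good g0 unfolding Dg_def by auto
    next
      case 3
      then show False using good ne by simp
    qed
  qed
  define Rel where "Rel = {(a, b). {a, b} \<in> E}"
  from assms(11) obtain u where u: "u \<in> {1..k}" and S: "S = {e \<in> E. e \<subseteq> {v \<in> {1..k}. (u, v) \<in> Rel\<^sup>*}}"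
    unfolding component_edges_def E_def Rel_def by blast
  show ?thesis
  proof (cases "S = {}")
    case True
    then show ?thesis using assms(12) by auto
  next
    case False
    then obtain e0 where e0: "e0 \<in> S" by blast
    then have "e0 \<in> E" using S by blast
    then obtain i0 where i0: "1 \<le> i0" "i0 + 1 \<le> k" "e0 = {i0, i0+1}" using edge_of by blast
    obtain l where l: "l \<in> {1..r}" "PP Gs (Ls l) i0 = Dg Gs" using exists[OF i0(1,2)] \<open>e0 \<in> E\<close> i0(3) by blast
    have adj: "\<And>j j' w. 1 \<le> j \<Longrightarrow> j + 1 \<le> k \<Longrightarrow> 1 \<le> j' \<Longrightarrow> j' + 1 \<le> k \<Longrightarrow>
       {j', j'+1} \<in> E \<Longrightarrow> w \<in> {j, j+1} \<Longrightarrow> w \<in> {j', j'+1} \<Longrightarrow> PP Gs (Ls l) j = Dg Gs \<Longrightarrow>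
       PP Gs (Ls l) j' = Dg Gs"
    proof -
      fix j j' w assume a: "1 \<le> j" "j + 1 \<le> k" "1 \<le> j'" "j' + 1 \<le> k" "{j', j'+1} \<in> E"
        "w \<in> {j, j+1}" "w \<in> {j', j'+1}" "PP Gs (Ls l) j = Dg Gs"
      have "j' = j + 1 \<or> j' + 1 = j \<or> j' = j" using a(6,7) by auto
      then show "PP Gs (Ls l) j' = Dg Gs" using propag[OF l(1) a(1-5) a(8)] by blast
    qed
    have claim: "\<And>w. (i0, w) \<in> Rel\<^sup>* \<Longrightarrow> \<forall>j. 1 \<le> j \<and> j + 1 \<le> k \<and> {j, j+1} \<in> E \<and> w \<in> {j, j+1} \<longrightarrow>
       PP Gs (Ls l) j = Dg Gs"
    proof -
      fix w assume "(i0, w) \<in> Rel\<^sup>*"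
      then show "\<forall>j. 1 \<le> j \<and> j + 1 \<le> k \<and> {j, j+1} \<in> E \<and> w \<in> {j, j+1} \<longrightarrow> PP Gs (Ls l) j = Dg Gs"
      proof (induction rule: rtrancl_induct)
        case base
        then show ?case using adj[OF i0(1,2)] l(2) by blast
      next
        case (step y z)
        then have "{y, z} \<in> E" unfolding Rel_def by simp
        then obtain j1 where j1: "1 \<le> j1" "j1 + 1 \<le> k" "{y, z} = {j1, j1+1}" using edge_of by blast
        have "{j1, j1+1} \<in> E" using j1(3) \<open>{y, z} \<in> E\<close> by simp
        moreover have "y \<in> {j1, j1+1}" "z \<in> {j1, j1+1}" using j1(3) by blast+
        ultimately have "PP Gs (Ls l) j1 = Dg Gs" using step.IH j1 by blast
        then show ?case using adj[OF j1(1,2)] \<open>z \<in> {j1, j1+1}\<close> by blast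
      qed
    qed
    have symR: "Rel\<inverse> = Rel" unfolding Rel_def by (auto simp: insert_commute)
    have "e0 \<subseteq> {v \<in> {1..k}. (u, v) \<in> Rel\<^sup>*}" using e0 S by simp
    then have "(u, i0) \<in> Rel\<^sup>*" using i0(3) by auto
    then have "(i0, u) \<in> Rel\<^sup>*" using rtrancl_converseI[of u i0 Rel] symR by simp
    show ?thesis
    proof (intro bexI[OF _ l(1)] subsetI)
      fix e assume e: "e \<in> S"
      then have eE: "e \<in> E" using S by blast
      then obtain j where j: "1 \<le> j" "j + 1 \<le> k" "e = {j, j+1}" using edge_of by blast
      have esub: "e \<subseteq> {v \<in> {1..k}. (u, v) \<in> Rel\<^sup>*}" using e S by simp
      then have "(u, j) \<in> Rel\<^sup>*" using j(3) by auto
      then have "(i0, j) \<in> Rel\<^sup>*" using \<open>(i0, u) \<in> Rel\<^sup>*\<close> by (rule rtrancl_trans[rotated])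
      then have gL: "PP Gs (Ls l) j = Dg Gs" using claim j eE by blast
      moreover have "PP Gs (Hs l) j = Dg Gs" using lowerb[OF l(1) j(1,2)] eE j(3) gL by blast
      ultimately show "e \<in> Eset Gs k (Hs l) \<inter> Eset Gs k (Ls l)"
        using Eset_iff[OF Hsc[OF l(1)]] Eset_iff[OF Lsc[OF l(1)]] j by blast
    qed
  qed
qed

end
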